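(* Let $Z_h$ be a $(\beta,M)$-scale free hashing-based estimator with $\beta\in[\tfrac12,1]$ and $M\ge 1$. Let $x$ be a query with $\mu=\mu(x)>0$, let $\tau\in[\mu,1]$ and $\gamma\in[0,1]$, and suppose $x$ is $(\tau,\gamma)$-localized. Then $$\mathbb{E}[Z_h^2]\le \mu^2\cdot M^3\left\{2\tau^{\beta}+\gamma^{2-\beta}+\tau^{2\beta-1}\gamma^{\beta}\right\}\mu^{-\beta}.$$
   Context: Let $P=\{x_1,\dots,x_n\}\subset\mathbb{R}^d$ be a dataset and $x\in\mathbb{R}^d$ a query. Each data point has a nonnegative weight $w_i=w_i(x)$ (e.g. $w_i(x)=k(x,x_i)$ for a kernel $k$), and $\mu=\mu(x)=\frac1n\sum_{i=1}^n w_i(x)$. Given a family $\mathcal{H}$ of hash functions on $\mathbb{R}^d$ with a probability distribution $\nu$, sample $h\sim\nu$ and let $H(x)=\{i\in[n]:h(x_i)=h(x)\}$; let $I(x)$ be a uniformly random element of $H(x)$, or $\perp$ if $H(x)$ is empty; let $p_i=p_i(x)=\Pr_{h\sim\nu}[i\in H(x)]$, with the conventions $p_\perp=1$, $w_\perp=0$. The hashing-based estimator (HBE) is $Z_h=Z_h(x)=\frac{w_{I(x)}}{p_{I(x)}}\cdot\frac{|H(x)|}{n}$. The HBE is $(\beta,M)$-scale free (for $\beta\in(0,1]$, $M\ge1$) if $M^{-1}w_i(x)^\beta\le p_i(x)\le M\,w_i(x)^\beta$ for all $i\in[n]$ and all queries $x$. For $\tau\in[\mu,1]$ let $B_{\tau,\mu}(x)=\{i\in[n]: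 w_i\ge \mu/\tau\}$; for $\gamma\in[0,1]$ the query $x$ is $(\tau,\gamma)$-localized if $\sum_{i\in B_{\tau,\mu}(x)}w_i\ge(1-\gamma)\sum_{i=1}^n w_i$. *)

theory Defs
  imports "HOL-Probability.Probability"
begin

text \<open>Data set P = (P 0, ..., P (n-1)) with points in real^'d; index set [n] = {..<n}.
  Weights w q i = w_i(q) for query q. Hash family: a pmf nu over hash functions.\<close>

definition mu_w :: "('q \<Rightarrow> nat \<Rightarrow> real) \<Rightarrow> nat \<Rightarrow> 'q \<Rightarrow> real" where
  "mu_w w n q = (\<Sum>i<n. w q i) / real n"

definition coll_prob :: "('a \<Rightarrow> 'b) pmf \<Rightarrow> (nat \<Rightarrow> 'a) \<Rightarrow> 'a \<Rightarrow> nat \<Rightarrow> real" where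
  "coll_prob \<nu> P q i = measure_pmf.prob \<nu> {h. h (P i) = h q}"

definition hash_bucket :: "('a \<Rightarrow> 'b) \<Rightarrow> (nat \<Rightarrow> 'a) \<Rightarrow> nat \<Rightarrow> 'a \<Rightarrow> nat set" where
  "hash_bucket h P n q = {i \<in> {..<n}. h (P i) = h q}"

text \<open>Distribution of the HBE Z_h(q): sample h from nu, then I(q) uniformly from H(q);
  if H(q) is empty then I = \<bottom> and Z = w_\<bottom>/p_\<bottom> * 0 = 0.\<close>
definition hbe :: "('a \<Rightarrow> 'b) pmf \<Rightarrow> (nat \<Rightarrow> 'a) \<Rightarrow> ('a \<Rightarrow> nat \<Rightarrow> real) \<Rightarrow> nat \<Rightarrow> 'a \<Rightarrow> real pmf" where
  "hbe \<nu> P w n q = do {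
     h \<leftarrow> \<nu>;
     let H = hash_bucket h P n q;
     if H = {} then return_pmf 0
     else map_pmf (\<lambda>i. w q i / coll_prob \<nu> P q i * (real (card H) / real n)) (pmf_of_set H)
   }"

definition scale_free :: "('a \<Rightarrow> 'b) pmf \<Rightarrow> (nat \<Rightarrow> 'a) \<Rightarrow> ('a \<Rightarrow> nat \<Rightarrow> real) \<Rightarrow> nat \<Rightarrow> real \<Rightarrow> real \<Rightarrow> bool" where
  "scale_free \<nu> P w n \<beta> M \<longleftrightarrow>
     (\<forall>q. \<forall>i<n. (1 / M) * w q i powr \<beta> \<le> coll_prob \<nu> P q i \<and> coll_prob \<nu> P q i \<le> M * w q i powr \<beta>)"

definition localized :: "('q \<Rightarrow> nat \<Rightarrow> real) \<Rightarrow> nat \<Rightarrow> 'q \<Rightarrow> real \<Rightarrow> real \<Rightarrow> bool" where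
  "localized w n q \<tau> \<gamma> \<longleftrightarrow>
     (\<Sum>i\<in>{i \<in> {..<n}. w q i \<ge> mu_w w n q / \<tau>}. w q i) \<ge> (1 - \<gamma>) * (\<Sum>i<n. w q i)"

end

theory Submission
  imports Defs
begin


lemma sum_powr_concave:
  fixes a :: "nat \<Rightarrow> real"
  assumes A: "finite A" and a: "\<And>j. j \<in> A \<Longrightarrow> 0 \<le> a j" and q: "0 \<le> q" "q \<le> 1"
  shows "(\<Sum>j\<in>A. a j powr q) \<le> real (card A) powr (1 - q) * (\<Sum>j\<in>A. a j) powr q"
proof (cases "(\<Sum>j\<in>A. a j) = 0")
  case True
  then have "\<forall>j\<in>A. a j = 0" using sum_nonneg_eq_0_iff[OF A] a by blast
  then show ?thesis by simp
next
  case False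
  define S where "S = (\<Sum>j\<in>A. a j)"
  have Spos: "S > 0" using False a unfolding S_def by (metis order_le_less sum_nonneg)
  have "A \<noteq> {}" using False by auto
  then have Npos: "real (card A) > 0" using A by (simp add: card_gt_0_iff)
  define N where "N = real (card A)"
  define m where "m = S / N"
  have mpos: "m > 0" unfolding m_def N_def using Spos Npos by simp
  have each: "a j powr q \<le> m powr q * (q * (a j / m) + (1 - q))" if "j \<in> A" for j
  proof (cases "a j = 0")
    case True
    then show ?thesis using q mpos by simp
  next
    case False
    have aj: "a j > 0" using a[OF that] False by linarith
    have "(a j / m) powr q * 1 powr (1 - q) \<le> q * (a j / m) + (1 - q) * 1"
      by (rule Youngs_inequality_0) (use q aj mpos in auto)
    then have "(a j / m) powr q \<le> q * (a j / m) + (1 - q)" by simp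
    moreover have "a j powr q = m powr q * (a j / m) powr q"
      using aj mpos by (simp add: powr_divide)
    ultimately show ?thesis using mpos by (simp add: mult_left_mono)
  qed
  have "(\<Sum>j\<in>A. a j powr q) \<le> (\<Sum>j\<in>A. m powr q * (q * (a j / m) + (1 - q)))"
    by (rule sum_mono) (rule each)
  also have "\<dots> = m powr q * (q * (S / m) + (1 - q) * N)"
    unfolding S_def N_def by (simp add: sum_distrib_left sum.distrib sum_divide_distrib[symmetric] ring_distribs)
  also have "\<dots> = m powr q * N"
    using mpos Npos unfolding m_def N_def by (simp add: field_simps)
  also have "\<dots> = N powr (1 - q) * S powr q"
    using Spos Npos unfolding m_def N_def by (simp add: powr_divide powr_diff field_simps)
  finally show ?thesis unfolding S_def N_def .
qed

lemma pw_bound: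
  fixes wi wj pi pj \<beta> M :: real
  assumes wi: "0 \<le> wi" and wj: "0 \<le> wj"
    and pi: "(1/M) * wi powr \<beta> \<le> pi" "pi \<le> M * wi powr \<beta>"
    and pj: "(1/M) * wj powr \<beta> \<le> pj" "pj \<le> M * wj powr \<beta>"
    and beta: "1/2 \<le> \<beta>" "\<beta> \<le> 1" and M: "1 \<le> M"
  shows "(wi / pi)^2 * min pi pj \<le> M^3 * (wi * wj powr (1 - \<beta>))"
    and "(wi / pi)^2 * min pi pj \<le> M^3 * (wi powr (2 - 2*\<beta>) * wj powr \<beta>)"
proof -
  have M0: "M > 0" using M by simp
  have "(wi / pi)^2 * min pi pj \<le> M^3 * (wi * wj powr (1 - \<beta>)) \<and>
        (wi / pi)^2 * min pi pj \<le> M^3 * (wi powr (2 - 2*\<beta>) * wj powr \<beta>)"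
  proof (cases "wi = 0 \<or> wj = 0")
    case True
    then show ?thesis
    proof
      assume "wi = 0" then show ?thesis using wj M0 by simp
    next
      assume "wj = 0"
      then have "pj \<le> 0" using pj by simp
      then have "min pi pj \<le> 0" by simp
      then have "(wi / pi)^2 * min pi pj \<le> 0" by (simp add: mult_nonneg_nonpos)
      moreover have "0 \<le> M^3 * (wi * wj powr (1 - \<beta>))" "0 \<le> M^3 * (wi powr (2 - 2*\<beta>) * wj powr \<beta>)"
        using wi wj M0 by simp_all
      ultimately show ?thesis by linarith
    qed
  next
    case False
    then have wi0: "wi > 0" and wj0: "wj > 0" using wi wj by auto
    have "0 < (1/M) * wi powr \<beta>" using M0 wi0 by simp
    then have pi0: "pi > 0" using pi(1) by linarith
    have "wi / pi \<le> wi / ((1/M) * wi powr \<beta>)"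
      by (rule divide_left_mono) (use pi pi0 wi0 M0 in auto)
    also have "\<dots> = M * wi powr (1 - \<beta>)"
      using wi0 M0 by (simp add: powr_diff field_simps)
    finally have c1: "wi / pi \<le> M * wi powr (1 - \<beta>)" .
    have c2: "(wi / pi)^2 \<le> M^2 * wi powr (2 - 2*\<beta>)"
    proof -
      have "(wi / pi)^2 \<le> (M * wi powr (1 - \<beta>))^2"
        by (rule power_mono[OF c1]) (use wi0 pi0 in simp)
      also have "\<dots> = M^2 * wi powr (2 - 2*\<beta>)"
        by (simp add: power_mult_distrib power2_eq_square powr_add[symmetric])
      finally show ?thesis .
    qed
    have mn: "min pi pj \<le> M * min (wi powr \<beta>) (wj powr \<beta>)"
      using pi pj M0 by (auto simp: min_def)
    have "0 \<le> (1/M) * wj powr \<beta>" using M0 by simp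
    then have "0 \<le> pj" using pj(1) by linarith
    then have mn0: "0 \<le> min pi pj" using pi0 by simp
    have base: "(wi / pi)^2 * min pi pj \<le> M^3 * (wi powr (2 - 2*\<beta>) * min (wi powr \<beta>) (wj powr \<beta>))"
    proof -
      have "(wi / pi)^2 * min pi pj \<le> (M^2 * wi powr (2 - 2*\<beta>)) * (M * min (wi powr \<beta>) (wj powr \<beta>))"
        by (rule mult_mono[OF c2 mn]) (use M0 mn0 in auto)
      then show ?thesis by (simp add: power3_eq_cube power2_eq_square mult_ac)
    qed
    have B: "wi powr (2 - 2*\<beta>) * min (wi powr \<beta>) (wj powr \<beta>) \<le> wi powr (2 - 2*\<beta>) * wj powr \<beta>"
      by (rule mult_left_mono) auto
    have A: "wi powr (2 - 2*\<beta>) * min (wi powr \<beta>) (wj powr \<beta>) \<le> wi * wj powr (1 - \<beta>)"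
    proof (cases "wi \<le> wj")
      case True
      have "wi powr (2 - 2*\<beta>) * min (wi powr \<beta>) (wj powr \<beta>) \<le> wi powr (2 - 2*\<beta>) * wi powr \<beta>"
        by (rule mult_left_mono) auto
      also have "\<dots> = wi * wi powr (1 - \<beta>)"
        using wi0 powr_add[of wi 1 "1 - \<beta>"] powr_add[of wi "2 - 2*\<beta>" \<beta>] by simp
      also have "\<dots> \<le> wi * wj powr (1 - \<beta>)"
        by (rule mult_left_mono[OF powr_mono2]) (use True wi0 beta in auto)
      finally show ?thesis .
    next
      case False
      have "wi powr (2 - 2*\<beta>) * min (wi powr \<beta>) (wj powr \<beta>) \<le> wi powr (2 - 2*\<beta>) * wj powr \<beta>"
        by (rule mult_left_mono) auto
      also have "\<dots> = wi powr (2 - 2*\<beta>) * (wj powr (2*\<beta> - 1) * wj powr (1 - \<beta>))"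
        by (simp add: powr_add[symmetric])
      also have "\<dots> \<le> wi powr (2 - 2*\<beta>) * (wi powr (2*\<beta> - 1) * wj powr (1 - \<beta>))"
        by (intro mult_left_mono mult_right_mono powr_mono2) (use False wj0 beta in auto)
      also have "\<dots> = wi * wj powr (1 - \<beta>)"
        using wi0 powr_add[of wi "2 - 2*\<beta>" "2*\<beta> - 1"] by (simp add: mult.assoc[symmetric])
      finally show ?thesis .
    qed
    have M3: "M^3 \<ge> 0" using M0 by simp
    show ?thesis using base mult_left_mono[OF A M3] mult_left_mono[OF B M3] by linarith
  qed
  then show "(wi / pi)^2 * min pi pj \<le> M^3 * (wi * wj powr (1 - \<beta>))"
    and "(wi / pi)^2 * min pi pj \<le> M^3 * (wi powr (2 - 2*\<beta>) * wj powr \<beta>)" by auto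
qed



lemma inner_exp:
  fixes h :: "'a \<Rightarrow> 'b" and P :: "nat \<Rightarrow> 'a" and c :: "nat \<Rightarrow> real" and x :: 'a
  assumes n: "n > 0"
  defines "H \<equiv> hash_bucket h P n x"
  shows "measure_pmf.expectation
     (if H = {} then return_pmf 0 else map_pmf (\<lambda>i. c i * (real (card H) / real n)) (pmf_of_set H))
     (\<lambda>z. z ^ 2)
   = (\<Sum>i<n. \<Sum>j<n. c i ^ 2 * indicator {h. h (P i) = h x \<and> h (P j) = h x} h) / (real n)^2"
proof -
  have fin: "finite H" unfolding H_def hash_bucket_def by auto
  have ind: "indicator {h. h (P i) = h x \<and> h (P j) = h x} h = (of_bool (i \<in> H) * of_bool (j \<in> H) :: real)"
    if "i < n" "j < n" for i j
    using that unfolding H_def hash_bucket_def by (auto simp: indicator_def)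
  have "(\<Sum>i<n. \<Sum>j<n. c i ^ 2 * indicator {h. h (P i) = h x \<and> h (P j) = h x} h)
      = (\<Sum>i<n. \<Sum>j<n. c i ^ 2 * of_bool (i \<in> H) * of_bool (j \<in> H))"
    by (intro sum.cong refl) (simp add: ind)
  also have "\<dots> = (\<Sum>i<n. c i ^ 2 * of_bool (i \<in> H) * real (card H))"
  proof (intro sum.cong refl)
    fix i
    have "({..<n} \<inter> {j. j \<in> H}) = H" unfolding H_def hash_bucket_def by auto
    then show "(\<Sum>j<n. c i ^ 2 * of_bool (i \<in> H) * of_bool (j \<in> H)) = c i ^ 2 * of_bool (i \<in> H) * real (card H)"
      by (simp add: sum_distrib_left[symmetric])
  qed
  also have "\<dots> = (\<Sum>i\<in>H. c i ^ 2) * real (card H)"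
  proof -
    have "({..<n} \<inter> {j. j \<in> H}) = H" unfolding H_def hash_bucket_def by auto
    then show ?thesis by (simp add: sum_distrib_right[symmetric])
  qed
  finally have eq: "(\<Sum>i<n. \<Sum>j<n. c i ^ 2 * indicator {h. h (P i) = h x \<and> h (P j) = h x} h)
      = (\<Sum>i\<in>H. c i ^ 2) * real (card H)" .
  show ?thesis
  proof (cases "H = {}")
    case True
    then show ?thesis using eq by simp
  next
    case False
    have "measure_pmf.expectation (map_pmf (\<lambda>i. c i * (real (card H) / real n)) (pmf_of_set H)) (\<lambda>z. z ^ 2)
       = (\<Sum>i\<in>H. (c i * (real (card H) / real n))^2) / real (card H)"
      using False fin by (simp add: integral_pmf_of_set)
    also have "\<dots> = (\<Sum>i\<in>H. c i ^ 2) * real (card H) / (real n)^2"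
    proof -
      have "(\<Sum>i\<in>H. (c i * (real (card H) / real n))^2) = (\<Sum>i\<in>H. c i ^ 2) * (real (card H) / real n)^2"
        unfolding sum_distrib_right by (intro sum.cong refl) (simp add: power_mult_distrib power_divide)
      moreover have "card H > 0" using False fin by (simp add: card_gt_0_iff)
      ultimately show ?thesis using n by (simp add: power2_eq_square field_simps)
    qed
    finally show ?thesis using False eq by simp
  qed
qed

lemma hbe_bound:
  fixes \<nu> :: "('a \<Rightarrow> 'b) pmf" and P :: "nat \<Rightarrow> 'a" and w :: "'a \<Rightarrow> nat \<Rightarrow> real" and x :: 'a
  assumes n: "n > 0"
  defines "c \<equiv> (\<lambda>i. w x i / coll_prob \<nu> P x i)"
  shows "measure_pmf.expectation (hbe \<nu> P w n x) (\<lambda>z. z ^ 2)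
     \<le> (\<Sum>i<n. \<Sum>j<n. c i ^ 2 * min (coll_prob \<nu> P x i) (coll_prob \<nu> P x j)) / (real n)^2"
proof -
  define inner where "inner = (\<lambda>h::'a \<Rightarrow> 'b. let H = hash_bucket h P n x in
     (if H = {} then return_pmf 0 else map_pmf (\<lambda>i. c i * (real (card H) / real n)) (pmf_of_set H)))"
  define g where "g = (\<lambda>h::'a \<Rightarrow> 'b. (\<Sum>i<n. \<Sum>j<n. c i ^ 2 * indicator {h. h (P i) = h x \<and> h (P j) = h x} h) / (real n)^2)"
  have hbe_eq: "hbe \<nu> P w n x = bind_pmf \<nu> inner"
    unfolding hbe_def inner_def c_def by simp
  have inner_g: "measure_pmf.expectation (inner h) (\<lambda>z. z ^ 2) = g h" for h
    unfolding inner_def g_def Let_def by (rule inner_exp[OF n])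
  have inner_int: "integrable (measure_pmf (inner h)) (\<lambda>z. z ^ 2)" for h
  proof -
    have "finite (hash_bucket h P n x)" unfolding hash_bucket_def by auto
    then have "finite (set_pmf (inner h))" unfolding inner_def Let_def by auto
    then show ?thesis by (rule integrable_measure_pmf_finite)
  qed
  have g_nonneg: "g h \<ge> 0" for h unfolding g_def by (intro divide_nonneg_nonneg sum_nonneg mult_nonneg_nonneg) auto
  have ind_int: "integrable (measure_pmf \<nu>) (indicator A :: _ \<Rightarrow> real)" for A
    by (rule measure_pmf.integrable_const_bound[where B=1]) (auto simp: indicator_def)
  have i1: "integrable (measure_pmf \<nu>) (\<lambda>h. c i ^ 2 * indicator {h. h (P i) = h x \<and> h (P j) = h x} h)" for i j
    by (intro integrable_mult_right ind_int)
  have i2: "integrable (measure_pmf \<nu>) (\<lambda>h. \<Sum>j<n. c i ^ 2 * indicator {h. h (P i) = h x \<and> h (P j) = h x} h)" for i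
    by (rule Bochner_Integration.integrable_sum[where f="\<lambda>j (h::'a\<Rightarrow>'b). c i ^ 2 * indicator {h. h (P i) = h x \<and> h (P j) = h x} h"]) (rule i1)
  have g_int: "integrable (measure_pmf \<nu>) g"
    unfolding g_def
    by (intro integrable_divide, rule Bochner_Integration.integrable_sum[where f="\<lambda>i (h::'a\<Rightarrow>'b). \<Sum>j<n. c i ^ 2 * indicator {h. h (P i) = h x \<and> h (P j) = h x} h"]) (rule i2)
  have "measure_pmf.expectation (hbe \<nu> P w n x) (\<lambda>z. z ^ 2)
      = enn2real (\<integral>\<^sup>+ z. ennreal (z ^ 2) \<partial>(bind_pmf \<nu> inner))"
    unfolding hbe_eq by (rule integral_eq_nn_integral) auto
  also have "\<dots> = enn2real (\<integral>\<^sup>+ h. \<integral>\<^sup>+ z. ennreal (z ^ 2) \<partial>(inner h) \<partial>\<nu>)"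
    by simp
  also have "(\<lambda>h. \<integral>\<^sup>+ z. ennreal (z ^ 2) \<partial>(inner h)) = (\<lambda>h. ennreal (g h))"
  proof
    fix h show "(\<integral>\<^sup>+ z. ennreal (z ^ 2) \<partial>(inner h)) = ennreal (g h)"
      by (subst nn_integral_eq_integral[OF inner_int]) (auto simp: inner_g)
  qed
  also have "(\<integral>\<^sup>+ h. ennreal (g h) \<partial>\<nu>) = ennreal (measure_pmf.expectation \<nu> g)"
    by (rule nn_integral_eq_integral[OF g_int]) (auto simp: g_nonneg)
  also have "enn2real (ennreal (measure_pmf.expectation \<nu> g)) = measure_pmf.expectation \<nu> g"
    using g_nonneg by (simp add: integral_nonneg_AE)
  also have "measure_pmf.expectation \<nu> g
     = (\<Sum>i<n. \<Sum>j<n. c i ^ 2 * measure_pmf.prob \<nu> {h. h (P i) = h x \<and> h (P j) = h x}) / (real n)^2"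
  proof -
    show ?thesis unfolding g_def
      by (simp only: integral_divide_zero Bochner_Integration.integral_sum[OF i2] Bochner_Integration.integral_sum[OF i1] integral_mult_right_zero
         Bochner_Integration.integral_indicator space_measure_pmf Int_UNIV_right)
  qed
  also have "\<dots> \<le> (\<Sum>i<n. \<Sum>j<n. c i ^ 2 * min (coll_prob \<nu> P x i) (coll_prob \<nu> P x j)) / (real n)^2"
    unfolding coll_prob_def
    by (intro divide_right_mono sum_mono mult_left_mono min.boundedI measure_pmf.finite_measure_mono) auto
  finally show ?thesis .
qed



lemma real_main:
  fixes w p :: "nat \<Rightarrow> real" and n :: nat and \<beta> M \<tau> \<gamma> \<mu> :: real
  assumes npos: "n > 0"
    and w0: "\<And>i. i < n \<Longrightarrow> 0 \<le> w i"
    and pb: "\<And>i. i < n \<Longrightarrow> (1/M) * w i powr \<beta> \<le> p i \<and> p i \<le> M * w i powr \<beta>"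
    and beta: "1/2 \<le> \<beta>" "\<beta> \<le> 1" and M: "1 \<le> M"
    and mu_def: "\<mu> = (\<Sum>i<n. w i) / real n" and mu_pos: "\<mu> > 0"
    and tau: "\<mu> \<le> \<tau>" "\<tau> \<le> 1"
    and gamma: "0 \<le> \<gamma>" "\<gamma> \<le> 1"
    and loc: "(\<Sum>i\<in>{i \<in> {..<n}. w i \<ge> \<mu> / \<tau>}. w i) \<ge> (1 - \<gamma>) * (\<Sum>i<n. w i)"
  shows "(\<Sum>i<n. \<Sum>j<n. (w i / p i)^2 * min (p i) (p j)) / (real n)^2
    \<le> \<mu> ^ 2 * M ^ 3 * (2 * \<tau> powr \<beta> + \<gamma> powr (2 - \<beta>) + \<tau> powr (2 * \<beta> - 1) * \<gamma> powr \<beta>) * \<mu> powr (- \<beta>)"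
proof -
  define S where "S = (\<Sum>i<n. w i)"
  define B where "B = {i \<in> {..<n}. w i \<ge> \<mu> / \<tau>}"
  define N where "N = {i \<in> {..<n}. \<not> (w i \<ge> \<mu> / \<tau>)}"
  define T where "T = (\<lambda>i j. (w i / p i)^2 * min (p i) (p j))"
  define G where "G = (\<Sum>j\<in>N. w j)"
  have M0: "M > 0" using M by simp
  have M3: "M^3 \<ge> 0" using M0 by simp
  have tau0: "\<tau> > 0" using tau mu_pos by simp
  have nr: "real n > 0" using npos by simp
  have S_eq: "S = real n * \<mu>" unfolding S_def mu_def using nr by simp
  have S0: "S > 0" using S_eq nr mu_pos by simp
  have finB: "finite B" and finN: "finite N" unfolding B_def N_def by auto
  have BN: "B \<union> N = {..<n}" "B \<inter> N = {}" unfolding B_def N_def by auto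
  have Bsub: "B \<subseteq> {..<n}" and Nsub: "N \<subseteq> {..<n}" unfolding B_def N_def by auto
  have wB: "w j \<ge> \<mu> / \<tau>" if "j \<in> B" for j using that unfolding B_def by auto
  have wnn: "0 \<le> w j" if "j \<in> B \<or> j \<in> N" for j using that w0 unfolding B_def N_def by auto
  have sumsplit: "sum f {..<n} = sum f B + sum f N" for f :: "nat \<Rightarrow> real"
    using sum.union_disjoint[OF finB finN BN(2), of f] BN(1) by simp
  have SB_le: "(\<Sum>j\<in>B. w j) \<le> S" and G_le_S: "G \<le> S"
    using sumsplit[of w] sum_nonneg[of B w] sum_nonneg[of N w] wnn unfolding S_def G_def by auto
  have G0: "G \<ge> 0" unfolding G_def using wnn by (auto intro: sum_nonneg)
  have GS: "G \<le> \<gamma> * S"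
    using loc sumsplit[of w] unfolding S_def G_def B_def[symmetric] by (simp add: algebra_simps)
  have T1: "T i j \<le> M^3 * (w i * w j powr (1 - \<beta>))" and T2: "T i j \<le> M^3 * (w i powr (2 - 2*\<beta>) * w j powr \<beta>)"
    if "i < n" "j < n" for i j
    using pw_bound[OF w0[OF that(1)] w0[OF that(2)] conjunct1[OF pb[OF that(1)]] conjunct2[OF pb[OF that(1)]]
      conjunct1[OF pb[OF that(2)]] conjunct2[OF pb[OF that(2)]] beta M] unfolding T_def by auto
  define a where "a = \<mu> powr \<beta>"
  define t where "t = \<tau> powr \<beta>"
  define m where "m = real n powr \<beta>"
  have a0: "a > 0" and t0: "t > 0" and m0: "m > 0" unfolding a_def t_def m_def using mu_pos tau0 nr by auto
  have qpow: "(\<mu> / \<tau>) powr (- \<beta>) = t / a"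
    unfolding a_def t_def by (simp add: powr_minus powr_divide)
  have q0: "\<mu> / \<tau> > 0" using mu_pos tau0 by simp
  have dec: "(\<Sum>i<n. \<Sum>j<n. T i j) = (\<Sum>i<n. \<Sum>j\<in>B. T i j) + (\<Sum>i\<in>B. \<Sum>j\<in>N. T i j) + (\<Sum>i\<in>N. \<Sum>j\<in>N. T i j)"
  proof -
    have "(\<Sum>i<n. \<Sum>j<n. T i j) = (\<Sum>i<n. (\<Sum>j\<in>B. T i j) + (\<Sum>j\<in>N. T i j))"
      by (intro sum.cong refl) (rule sumsplit)
    also have "\<dots> = (\<Sum>i<n. \<Sum>j\<in>B. T i j) + (\<Sum>i<n. \<Sum>j\<in>N. T i j)" by (rule sum.distrib)
    also have "(\<Sum>i<n. \<Sum>j\<in>N. T i j) = (\<Sum>i\<in>B. \<Sum>j\<in>N. T i j) + (\<Sum>i\<in>N. \<Sum>j\<in>N. T i j)" by (rule sumsplit)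
    finally show ?thesis by simp
  qed
  have P1: "(\<Sum>i<n. \<Sum>j\<in>B. T i j) \<le> M^3 * S * (S * (t / a))"
  proof -
    have "(\<Sum>i<n. \<Sum>j\<in>B. T i j) \<le> (\<Sum>i<n. \<Sum>j\<in>B. M^3 * (w i * w j powr (1 - \<beta>)))"
      by (intro sum_mono T1) (use Bsub in auto)
    also have "\<dots> = M^3 * S * (\<Sum>j\<in>B. w j powr (1 - \<beta>))"
      unfolding S_def by (simp add: sum_distrib_left sum_distrib_right mult_ac)
    also have "(\<Sum>j\<in>B. w j powr (1 - \<beta>)) \<le> (\<Sum>j\<in>B. w j * (t / a))"
    proof (rule sum_mono)
      fix j assume j: "j \<in> B"
      have wj: "w j > 0" using wB[OF j] q0 by linarith
      have "w j powr (1 - \<beta>) = w j * w j powr (- \<beta>)"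
        using powr_add[of "w j" 1 "- \<beta>"] wj by simp
      also have "\<dots> \<le> w j * (\<mu> / \<tau>) powr (- \<beta>)"
        by (intro mult_left_mono powr_mono2') (use wB[OF j] q0 wj beta in auto)
      finally show "w j powr (1 - \<beta>) \<le> w j * (t / a)" using qpow by simp
    qed
    also have "(\<Sum>j\<in>B. w j * (t / a)) \<le> S * (t / a)"
      unfolding sum_distrib_right[symmetric] by (rule mult_right_mono[OF SB_le]) (use t0 a0 in simp)
    finally show ?thesis using M3 S0 by (simp add: mult_left_mono)
  qed
  have P2: "(\<Sum>i\<in>B. \<Sum>j\<in>N. T i j) \<le> M^3 * (S * ((\<mu> / \<tau>) * (t / a)^2)) * (real n / m * G powr \<beta>)"
  proof -
    have s1: "(\<Sum>i\<in>B. \<Sum>j\<in>N. T i j) \<le> M^3 * (\<Sum>i\<in>B. w i powr (2 - 2*\<beta>)) * (\<Sum>j\<in>N. w j powr \<beta>)"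
    proof -
      have "(\<Sum>i\<in>B. \<Sum>j\<in>N. T i j) \<le> (\<Sum>i\<in>B. \<Sum>j\<in>N. M^3 * (w i powr (2 - 2*\<beta>) * w j powr \<beta>))"
        by (intro sum_mono T2) (use Bsub Nsub in auto)
      also have "\<dots> = M^3 * (\<Sum>i\<in>B. w i powr (2 - 2*\<beta>)) * (\<Sum>j\<in>N. w j powr \<beta>)"
        by (simp add: sum_distrib_left sum_distrib_right mult_ac)
      finally show ?thesis .
    qed
    have s2: "(\<Sum>i\<in>B. w i powr (2 - 2*\<beta>)) \<le> S * ((\<mu> / \<tau>) * (t / a)^2)"
    proof -
      have "(\<Sum>i\<in>B. w i powr (2 - 2*\<beta>)) \<le> (\<Sum>i\<in>B. w i * ((\<mu> / \<tau>) * (t / a)^2))"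
      proof (rule sum_mono)
        fix j assume j: "j \<in> B"
        have wj: "w j > 0" using wB[OF j] q0 by linarith
        have "w j powr (2 - 2*\<beta>) = w j * w j powr (1 - 2*\<beta>)"
          using powr_add[of "w j" 1 "1 - 2*\<beta>"] wj by simp
        also have "\<dots> \<le> w j * (\<mu> / \<tau>) powr (1 - 2*\<beta>)"
          by (intro mult_left_mono powr_mono2') (use wB[OF j] q0 wj beta in auto)
        also have "(\<mu> / \<tau>) powr (1 - 2*\<beta>) = (\<mu> / \<tau>) * ((\<mu> / \<tau>) powr (- \<beta>))^2"
          using powr_add[of "\<mu> / \<tau>" 1 "- \<beta>"] powr_add[of "\<mu> / \<tau>" "1 - \<beta>" "- \<beta>"] q0 mu_pos tau0
          by (simp add: power2_eq_square mult_ac)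
        finally show "w j powr (2 - 2*\<beta>) \<le> w j * ((\<mu> / \<tau>) * (t / a)^2)" using qpow by simp
      qed
      also have "(\<Sum>i\<in>B. w i * ((\<mu> / \<tau>) * (t / a)^2)) \<le> S * ((\<mu> / \<tau>) * (t / a)^2)"
        unfolding sum_distrib_right[symmetric] by (rule mult_right_mono[OF SB_le]) (use mu_pos tau0 in simp)
      finally show ?thesis .
    qed
    have s3: "(\<Sum>j\<in>N. w j powr \<beta>) \<le> real n / m * G powr \<beta>"
    proof -
      have "(\<Sum>j\<in>N. w j powr \<beta>) \<le> real (card N) powr (1 - \<beta>) * G powr \<beta>"
        unfolding G_def by (rule sum_powr_concave[OF finN]) (use wnn beta in auto)
      also have "real (card N) powr (1 - \<beta>) \<le> real n powr (1 - \<beta>)"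
      proof (rule powr_mono2)
        show "real (card N) \<le> real n" using card_mono[OF _ Nsub] by simp
      qed (use beta in auto)
      then have "real (card N) powr (1 - \<beta>) * G powr \<beta> \<le> real n powr (1 - \<beta>) * G powr \<beta>"
        by (rule mult_right_mono) simp
      also have "real n powr (1 - \<beta>) = real n / m"
        unfolding m_def using nr by (simp add: powr_diff)
      finally show ?thesis .
    qed
    have nn1: "0 \<le> (\<Sum>i\<in>B. w i powr (2 - 2*\<beta>))" "0 \<le> (\<Sum>j\<in>N. w j powr \<beta>)"
      by (auto intro: sum_nonneg)
    have "M^3 * (\<Sum>i\<in>B. w i powr (2 - 2*\<beta>)) * (\<Sum>j\<in>N. w j powr \<beta>)
        \<le> M^3 * (S * ((\<mu> / \<tau>) * (t / a)^2)) * (real n / m * G powr \<beta>)"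
    proof -
      have "0 \<le> S * ((\<mu> / \<tau>) * (t / a)^2)" using S0 mu_pos tau0 by simp
      then have "(\<Sum>i\<in>B. w i powr (2 - 2*\<beta>)) * (\<Sum>j\<in>N. w j powr \<beta>)
          \<le> (S * ((\<mu> / \<tau>) * (t / a)^2)) * (real n / m * G powr \<beta>)"
        by (intro mult_mono s2 s3 nn1)
      from mult_left_mono[OF this M3] show ?thesis by (simp add: mult.assoc)
    qed
    with s1 show ?thesis by linarith
  qed
  have P3: "(\<Sum>i\<in>N. \<Sum>j\<in>N. T i j) \<le> M^3 * G * (m * G powr (1 - \<beta>))"
  proof -
    have s1: "(\<Sum>i\<in>N. \<Sum>j\<in>N. T i j) \<le> M^3 * G * (\<Sum>j\<in>N. w j powr (1 - \<beta>))"
    proof -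
      have "(\<Sum>i\<in>N. \<Sum>j\<in>N. T i j) \<le> (\<Sum>i\<in>N. \<Sum>j\<in>N. M^3 * (w i * w j powr (1 - \<beta>)))"
        by (intro sum_mono T1) (use Nsub in auto)
      also have "\<dots> = M^3 * G * (\<Sum>j\<in>N. w j powr (1 - \<beta>))"
        unfolding G_def by (simp add: sum_distrib_left sum_distrib_right mult_ac)
      finally show ?thesis .
    qed
    have s3: "(\<Sum>j\<in>N. w j powr (1 - \<beta>)) \<le> m * G powr (1 - \<beta>)"
    proof -
      have "(\<Sum>j\<in>N. w j powr (1 - \<beta>)) \<le> real (card N) powr (1 - (1 - \<beta>)) * G powr (1 - \<beta>)"
        unfolding G_def by (rule sum_powr_concave[OF finN]) (use wnn beta in auto)
      also have "real (card N) powr (1 - (1 - \<beta>)) \<le> m"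
        unfolding m_def
      proof (simp, rule powr_mono2)
        show "real (card N) \<le> real n" using card_mono[OF _ Nsub] by simp
      qed (use beta in auto)
      then have "real (card N) powr (1 - (1 - \<beta>)) * G powr (1 - \<beta>) \<le> m * G powr (1 - \<beta>)"
        by (rule mult_right_mono) simp
      finally show ?thesis .
    qed
    have "M^3 * G * (\<Sum>j\<in>N. w j powr (1 - \<beta>)) \<le> M^3 * G * (m * G powr (1 - \<beta>))"
      by (rule mult_left_mono[OF s3]) (use M3 G0 in simp)
    with s1 show ?thesis by linarith
  qed
  define gb where "gb = \<gamma> powr \<beta>"
  define g2 where "g2 = \<gamma> powr (2 - \<beta>)"
  have gb0: "gb \<ge> 0" and g20: "g2 \<ge> 0" unfolding gb_def g2_def by auto
  have Gb: "G powr \<beta> \<le> gb * (m * a)"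
  proof -
    have "G powr \<beta> \<le> (\<gamma> * S) powr \<beta>" by (rule powr_mono2) (use beta G0 GS in auto)
    also have "\<dots> = gb * (m * a)" unfolding gb_def m_def a_def S_eq by (simp add: powr_mult)
    finally show ?thesis .
  qed
  have G2: "G * G powr (1 - \<beta>) \<le> g2 * ((real n)^2 * \<mu>^2 / (m * a))"
  proof -
    have "G * G powr (1 - \<beta>) = G powr (2 - \<beta>)"
      using powr_add[of G 1 "1 - \<beta>"] G0 by (simp add: powr_one)
    also have "\<dots> \<le> (\<gamma> * S) powr (2 - \<beta>)" by (rule powr_mono2) (use beta G0 GS in auto)
    also have "\<dots> = g2 * (S powr 2 / S powr \<beta>)" unfolding g2_def by (simp add: powr_mult powr_diff)
    also have "S powr 2 = (real n)^2 * \<mu>^2" using S0 S_eq by (simp add: powr_realpow power_mult_distrib)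
    also have "S powr \<beta> = m * a" unfolding m_def a_def S_eq by (simp add: powr_mult)
    finally show ?thesis .
  qed
  have X2: "M^3 * (S * ((\<mu> / \<tau>) * (t / a)^2)) * (real n / m * G powr \<beta>)
      \<le> M^3 * (S * ((\<mu> / \<tau>) * (t / a)^2)) * (real n / m * (gb * (m * a)))"
    by (intro mult_left_mono Gb) (use M3 S0 mu_pos tau0 nr m0 in auto)
  have X3: "M^3 * G * (m * G powr (1 - \<beta>)) \<le> M^3 * m * (g2 * ((real n)^2 * \<mu>^2 / (m * a)))"
  proof -
    have "M^3 * G * (m * G powr (1 - \<beta>)) = M^3 * m * (G * G powr (1 - \<beta>))" by (simp add: mult_ac)
    also have "\<dots> \<le> M^3 * m * (g2 * ((real n)^2 * \<mu>^2 / (m * a)))"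
      by (intro mult_left_mono G2) (use M3 m0 in auto)
    finally show ?thesis .
  qed
  have tot: "(\<Sum>i<n. \<Sum>j<n. T i j) \<le> M^3 * S * (S * (t / a))
      + M^3 * (S * ((\<mu> / \<tau>) * (t / a)^2)) * (real n / m * (gb * (m * a)))
      + M^3 * m * (g2 * ((real n)^2 * \<mu>^2 / (m * a)))"
    using dec P1 P2 P3 X2 X3 by linarith
  have eqL: "(M^3 * S * (S * (t / a))
      + M^3 * (S * ((\<mu> / \<tau>) * (t / a)^2)) * (real n / m * (gb * (m * a)))
      + M^3 * m * (g2 * ((real n)^2 * \<mu>^2 / (m * a)))) / (real n)^2
      = M^3 * \<mu>^2 * t / a + M^3 * \<mu>^2 * t^2 * gb / (\<tau> * a) + M^3 * \<mu>^2 * g2 / a"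
  proof -
    have e1: "M^3 * S * (S * (t / a)) / (real n)^2 = M^3 * \<mu>^2 * t / a"
      unfolding S_eq using nr by (simp add: power2_eq_square)
    have e2: "M^3 * (S * ((\<mu> / \<tau>) * (t / a)^2)) * (real n / m * (gb * (m * a))) / (real n)^2
        = M^3 * \<mu>^2 * t^2 * gb / (\<tau> * a)"
      unfolding S_eq using nr m0 a0 by (simp add: power2_eq_square)
    have e3: "M^3 * m * (g2 * ((real n)^2 * \<mu>^2 / (m * a))) / (real n)^2 = M^3 * \<mu>^2 * g2 / a"
      using nr m0 a0 by (simp add: power2_eq_square)
    show ?thesis unfolding add_divide_distrib e1 e2 e3 ..
  qed
  have tpow: "\<tau> powr (2 * \<beta> - 1) = t^2 / \<tau>"
  proof -
    have "\<tau> powr (2 * \<beta> - 1) = \<tau> powr (\<beta> + \<beta>) / \<tau> powr 1"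
      by (simp only: powr_diff[symmetric] mult_2)
    also have "\<dots> = t^2 / \<tau>"
      unfolding t_def powr_add using tau0 by (simp add: power2_eq_square)
    finally show ?thesis .
  qed
  have eqR: "\<mu> ^ 2 * M ^ 3 * (2 * \<tau> powr \<beta> + \<gamma> powr (2 - \<beta>) + \<tau> powr (2 * \<beta> - 1) * \<gamma> powr \<beta>) * \<mu> powr (- \<beta>)
      = 2 * (M^3 * \<mu>^2 * t / a) + M^3 * \<mu>^2 * g2 / a + M^3 * \<mu>^2 * t^2 * gb / (\<tau> * a)"
    unfolding tpow t_def[symmetric] gb_def[symmetric] g2_def[symmetric] powr_minus a_def[symmetric]
    using a0 tau0 by (simp add: divide_inverse algebra_simps)
  have slack: "0 \<le> M^3 * \<mu>^2 * t / a" using M3 t0 a0 by simp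
  have "(\<Sum>i<n. \<Sum>j<n. T i j) / (real n)^2 \<le> (M^3 * S * (S * (t / a))
      + M^3 * (S * ((\<mu> / \<tau>) * (t / a)^2)) * (real n / m * (gb * (m * a)))
      + M^3 * m * (g2 * ((real n)^2 * \<mu>^2 / (m * a)))) / (real n)^2"
    by (rule divide_right_mono[OF tot]) simp
  then show ?thesis unfolding eqL eqR T_def using slack by linarith
qed


theorem theorem5:
  fixes \<nu> :: "(real ^ 'd \<Rightarrow> 'b) pmf" and P :: "nat \<Rightarrow> real ^ 'd"
    and w :: "real ^ 'd \<Rightarrow> nat \<Rightarrow> real" and n :: nat
    and x :: "real ^ 'd" and \<beta> M \<tau> \<gamma> :: real
  assumes w_nonneg: "\<And>q i. i < n \<Longrightarrow> 0 \<le> w q i"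
    and sf: "scale_free \<nu> P w n \<beta> M"
    and beta: "1/2 \<le> \<beta>" "\<beta> \<le> 1"
    and M: "1 \<le> M"
    and mu_pos: "mu_w w n x > 0"
    and tau: "mu_w w n x \<le> \<tau>" "\<tau> \<le> 1"
    and gamma: "0 \<le> \<gamma>" "\<gamma> \<le> 1"
    and loc: "localized w n x \<tau> \<gamma>"
  shows "measure_pmf.expectation (hbe \<nu> P w n x) (\<lambda>z. z ^ 2)
    \<le> (mu_w w n x) ^ 2 * M ^ 3
       * (2 * \<tau> powr \<beta> + \<gamma> powr (2 - \<beta>) + \<tau> powr (2 * \<beta> - 1) * \<gamma> powr \<beta>)
       * (mu_w w n x) powr (- \<beta>)"
proof -
  have npos: "n > 0"
  proof (rule ccontr)
    assume "\<not> n > 0" then have "n = 0" by simp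
    then show False using mu_pos unfolding mu_w_def by simp
  qed
  have "measure_pmf.expectation (hbe \<nu> P w n x) (\<lambda>z. z ^ 2)
     \<le> (\<Sum>i<n. \<Sum>j<n. (w x i / coll_prob \<nu> P x i) ^ 2 * min (coll_prob \<nu> P x i) (coll_prob \<nu> P x j)) / (real n)^2"
    by (rule hbe_bound[OF npos])
  also have "\<dots> \<le> (mu_w w n x) ^ 2 * M ^ 3
       * (2 * \<tau> powr \<beta> + \<gamma> powr (2 - \<beta>) + \<tau> powr (2 * \<beta> - 1) * \<gamma> powr \<beta>)
       * (mu_w w n x) powr (- \<beta>)"
  proof (rule real_main[OF npos])
    show "\<And>i. i < n \<Longrightarrow> 0 \<le> w x i" using w_nonneg by simp
    show "\<And>i. i < n \<Longrightarrow> 1 / M * w x i powr \<beta> \<le> coll_prob \<nu> P x i \<and> coll_prob \<nu> P x i \<le> M * w x i powr \<beta>"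
      using sf unfolding scale_free_def by blast
    show "mu_w w n x = (\<Sum>i<n. w x i) / real n" unfolding mu_w_def ..
    show "(\<Sum>i\<in>{i \<in> {..<n}. w x i \<ge> mu_w w n x / \<tau>}. w x i) \<ge> (1 - \<gamma>) * (\<Sum>i<n. w x i)"
      using loc unfolding localized_def .
  qed (use beta M mu_pos tau gamma in auto)
  finally show ?thesis .
qed

end
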